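(* Let $H=\sum_{i=1}^Nc_iP_i$ be a Pauli Hamiltonian, $|\psi\rangle$ a state, $\mathcal{R}=(G^{[1]},\dots,G^{[m]})$ a repacked grouping and $\mathcal{R}'=(G'^{[1]},\dots,G'^{[m]})$ a refinement of $\mathcal{R}$ such that for some $\ell$, $G'^{[j]}=G^{[j]}$ for $j\neq\ell$ and $G'^{[\ell]}\setminus G^{[\ell]}=\{P_s\}$. Fix positive shot counts $M_1,\dots,M_m$ used for both. Suppose additionally that $\sigma_{P_iP_s}=0$ for all $i\ne s$ with $P_i$ commuting with $P_s$. Then, for the shot-weighted averaging estimators, $\mathrm{Var}(\overline{E}_{\mathcal{R}'})\le\mathrm{Var}(\overline{E}_{\mathcal{R}})$, and $\mathrm{Var}(\overline{E}_{\mathcal{R}'})<\mathrm{Var}(\overline{E}_{\mathcal{R}})$ if and only if $\sigma^2_{P_s}>0$.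
   Context: A Pauli Hamiltonian is $H=\sum_{i=1}^Nc_iP_i$ with real nonzero $c_i$ and distinct $n$-qubit Pauli strings. $\sigma_P^2=1-\langle P\rangle^2$; for commuting $P,Q$, $\sigma_{PQ}=\langle PQ\rangle-\langle P\rangle\langle Q\rangle$. A repacked grouping is a list of $m$ sets of mutually commuting Pauli terms of $H$ covering all terms, possibly overlapping, each containing the corresponding group of an underlying disjoint grouping; a refinement enlarges each set (keeping commutativity). Measurement model: group $j$ is measured in $M_j$ independent shots with simultaneous $\pm1$ outcomes of all its operators; different groups are independent. With $\Gamma_{\mathcal{S}}(i)$ the set of groups of $\mathcal{S}$ containing $P_i$ and $\overline{\langle P_i\rangle}_{(j)}$ the sample mean over group $j$'s shots, the shot-weighted estimator is $\overline{E}_{\mathcal{S}}=\sum_ic_i\sum_{j\in\Gamma_{\mathcal{S}}(i)}\frac{M_j}{\sum_{k\in\Gamma_{\mathcal{S}}(i)}M_k}\overline{\langle P_i\rangle}_{(j)}$. *)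

theory Defs
  imports Complex_Main
begin

datatype pauli = PI | PX | PY | PZ

definition anti1 :: "pauli \<Rightarrow> pauli \<Rightarrow> bool" where
  "anti1 a b \<longleftrightarrow> a \<noteq> PI \<and> b \<noteq> PI \<and> a \<noteq> b"

definition pauli_commute :: "pauli list \<Rightarrow> pauli list \<Rightarrow> bool" where
  "pauli_commute p q \<longleftrightarrow> even (card {k. k < length p \<and> anti1 (p ! k) (q ! k)})"

definition pauli_hamiltonian ::
  "nat \<Rightarrow> nat \<Rightarrow> (nat \<Rightarrow> real) \<Rightarrow> (nat \<Rightarrow> pauli list) \<Rightarrow> bool" where
  "pauli_hamiltonian n N c P \<longleftrightarrow>
     (\<forall>i<N. length (P i) = n \<and> c i \<noteq> 0) \<and> inj_on P {..<N}"

text \<open>A state enters only through the expectation values ev p = <P> and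
  ev2 p q = <PQ> (for commuting p, q).\<close>
definition state_moments ::
  "nat \<Rightarrow> (pauli list \<Rightarrow> real) \<Rightarrow> (pauli list \<Rightarrow> pauli list \<Rightarrow> real) \<Rightarrow> bool" where
  "state_moments n ev ev2 \<longleftrightarrow>
     (\<forall>p. length p = n \<longrightarrow> \<bar>ev p\<bar> \<le> 1) \<and>
     (\<forall>p q. length p = n \<and> length q = n \<and> pauli_commute p q \<longrightarrow> ev2 p q = ev2 q p)"

definition sigma2 :: "(pauli list \<Rightarrow> real) \<Rightarrow> pauli list \<Rightarrow> real" where
  "sigma2 ev p = 1 - (ev p)\<^sup>2"

definition sigma_cov ::
  "(pauli list \<Rightarrow> real) \<Rightarrow> (pauli list \<Rightarrow> pauli list \<Rightarrow> real) \<Rightarrow> pauli list \<Rightarrow> pauli list \<Rightarrow> real" where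
  "sigma_cov ev ev2 p q = ev2 p q - ev p * ev q"

definition term_cov ::
  "(pauli list \<Rightarrow> real) \<Rightarrow> (pauli list \<Rightarrow> pauli list \<Rightarrow> real) \<Rightarrow> (nat \<Rightarrow> pauli list)
   \<Rightarrow> nat \<Rightarrow> nat \<Rightarrow> real" where
  "term_cov ev ev2 P i k = (if i = k then sigma2 ev (P i) else sigma_cov ev ev2 (P i) (P k))"

definition commuting_set :: "(nat \<Rightarrow> pauli list) \<Rightarrow> nat set \<Rightarrow> bool" where
  "commuting_set P A \<longleftrightarrow> (\<forall>i\<in>A. \<forall>k\<in>A. pauli_commute (P i) (P k))"

definition disjoint_grouping ::
  "nat \<Rightarrow> nat \<Rightarrow> (nat \<Rightarrow> pauli list) \<Rightarrow> (nat \<Rightarrow> nat set) \<Rightarrow> bool" where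
  "disjoint_grouping N m P D \<longleftrightarrow>
     (\<forall>j<m. D j \<subseteq> {..<N} \<and> commuting_set P (D j)) \<and>
     (\<forall>j<m. \<forall>j'<m. j \<noteq> j' \<longrightarrow> D j \<inter> D j' = {}) \<and>
     (\<Union>j<m. D j) = {..<N}"

definition repacked_grouping ::
  "nat \<Rightarrow> nat \<Rightarrow> (nat \<Rightarrow> pauli list) \<Rightarrow> (nat \<Rightarrow> nat set) \<Rightarrow> bool" where
  "repacked_grouping N m P G \<longleftrightarrow>
     (\<forall>j<m. G j \<subseteq> {..<N} \<and> commuting_set P (G j)) \<and>
     (\<Union>j<m. G j) = {..<N} \<and>
     (\<exists>D. disjoint_grouping N m P D \<and> (\<forall>j<m. D j \<subseteq> G j))"

definition refinement ::
  "nat \<Rightarrow> nat \<Rightarrow> (nat \<Rightarrow> pauli list) \<Rightarrow> (nat \<Rightarrow> nat set) \<Rightarrow> (nat \<Rightarrow> nat set) \<Rightarrow> bool" where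
  "refinement N m P G G' \<longleftrightarrow>
     repacked_grouping N m P G \<and>
     (\<forall>j<m. G j \<subseteq> G' j \<and> G' j \<subseteq> {..<N} \<and> commuting_set P (G' j))"

definition Gamma :: "nat \<Rightarrow> (nat \<Rightarrow> nat set) \<Rightarrow> nat \<Rightarrow> nat set" where
  "Gamma m S i = {j. j < m \<and> i \<in> S j}"

definition shot_weight :: "(nat \<Rightarrow> nat) \<Rightarrow> nat \<Rightarrow> (nat \<Rightarrow> nat set) \<Rightarrow> nat \<Rightarrow> nat \<Rightarrow> real" where
  "shot_weight M m S i j = real (M j) / (\<Sum>k\<in>Gamma m S i. real (M k))"

text \<open>The estimator is E = sum_j sum_{i in S_j} c_i w_{ij} mean_j(P_i), where mean_j is the
  average over the M_j independent shots of group j, groups independent.  Hence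
  Var(E) = sum_j (1/M_j) Var_single_shot(sum_{i in S_j} c_i w_{ij} P_i)
         = sum_j (1/M_j) sum_{i,k in S_j} c_i c_k w_{ij} w_{kj} sigma_{P_i P_k}.\<close>
definition estimator_variance ::
  "(nat \<Rightarrow> real) \<Rightarrow> (nat \<Rightarrow> pauli list) \<Rightarrow> (pauli list \<Rightarrow> real) \<Rightarrow> (pauli list \<Rightarrow> pauli list \<Rightarrow> real)
   \<Rightarrow> (nat \<Rightarrow> nat) \<Rightarrow> nat \<Rightarrow> (nat \<Rightarrow> nat set) \<Rightarrow> real" where
  "estimator_variance c P ev ev2 M m S =
     (\<Sum>j<m. (1 / real (M j)) *
        (\<Sum>i\<in>S j. \<Sum>k\<in>S j. c i * c k * shot_weight M m S i j * shot_weight M m S k j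
                              * term_cov ev ev2 P i k))"

end

theory Submission
  imports Defs
begin

lemma split_sum:
  fixes f :: "nat \<Rightarrow> nat \<Rightarrow> real"
  assumes "finite X"
    and "\<And>i. s \<in> X \<Longrightarrow> i \<in> X \<Longrightarrow> i \<noteq> s \<Longrightarrow> f i s = 0"
    and "\<And>i. s \<in> X \<Longrightarrow> i \<in> X \<Longrightarrow> i \<noteq> s \<Longrightarrow> f s i = 0"
  shows "(\<Sum>i\<in>X. \<Sum>k\<in>X. f i k) = (\<Sum>i\<in>X-{s}. \<Sum>k\<in>X-{s}. f i k) + (if s \<in> X then f s s else 0)"
proof (cases "s \<in> X")
  case False
  then show ?thesis by simp
next
  case True
  define Y where "Y = X - {s}"
  have X: "X = insert s Y" and sY: "s \<notin> Y" and fY: "finite Y"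
    using True assms(1) by (auto simp: Y_def)
  have z1: "(\<Sum>k\<in>Y. f s k) = 0" using assms(3)[OF True] by (auto simp: Y_def)
  have z2: "(\<Sum>i\<in>Y. f i s) = 0" using assms(2)[OF True] by (auto simp: Y_def)
  have "(\<Sum>i\<in>X. \<Sum>k\<in>X. f i k) = (\<Sum>i\<in>insert s Y. f i s + (\<Sum>k\<in>Y. f i k))"
    unfolding X using sY fY by simp
  also have "\<dots> = f s s + (\<Sum>k\<in>Y. f s k) + ((\<Sum>i\<in>Y. f i s) + (\<Sum>i\<in>Y. \<Sum>k\<in>Y. f i k))"
    using sY fY by (simp add: sum.distrib)
  also have "\<dots> = (\<Sum>i\<in>Y. \<Sum>k\<in>Y. f i k) + f s s" using z1 z2 by simp
  finally show ?thesis using True by (simp add: Y_def)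
qed

lemma decomp:
  fixes S :: "nat \<Rightarrow> nat set"
  assumes ham: "pauli_hamiltonian n N c P"
    and st: "state_moments n ev ev2"
    and S: "\<forall>j<m. S j \<subseteq> {..<N} \<and> commuting_set P (S j)"
    and sN: "s < N"
    and uncorr: "\<forall>i<N. i \<noteq> s \<and> pauli_commute (P i) (P s) \<longrightarrow> sigma_cov ev ev2 (P i) (P s) = 0"
  shows "estimator_variance c P ev ev2 M m S =
     (\<Sum>j<m. (1 / real (M j)) *
        (\<Sum>i\<in>S j - {s}. \<Sum>k\<in>S j - {s}. c i * c k * shot_weight M m S i j * shot_weight M m S k j
                              * term_cov ev ev2 P i k))
   + (\<Sum>j<m. (1 / real (M j)) * (if s \<in> S j then c s * c s * shot_weight M m S s j * shot_weight M m S s j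
                              * sigma2 ev (P s) else 0))"
proof -
  have inner: "(\<Sum>i\<in>S j. \<Sum>k\<in>S j. c i * c k * shot_weight M m S i j * shot_weight M m S k j
                              * term_cov ev ev2 P i k) =
     (\<Sum>i\<in>S j - {s}. \<Sum>k\<in>S j - {s}. c i * c k * shot_weight M m S i j * shot_weight M m S k j
                              * term_cov ev ev2 P i k)
    + (if s \<in> S j then c s * c s * shot_weight M m S s j * shot_weight M m S s j
                              * sigma2 ev (P s) else 0)" if j: "j < m" for j
  proof -
    have fin: "finite (S j)" using S j finite_subset by blast
    have cov0: "sigma_cov ev ev2 (P i) (P s) = 0 \<and> sigma_cov ev ev2 (P s) (P i) = 0"
      if "s \<in> S j" "i \<in> S j" "i \<noteq> s" for i
    proof -
      have iN: "i < N" using S j that by auto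
      have com: "pauli_commute (P i) (P s)" using S j that unfolding commuting_set_def by auto
      have a: "sigma_cov ev ev2 (P i) (P s) = 0" using uncorr iN that com by auto
      have len: "length (P i) = n" "length (P s) = n" using ham iN sN
        unfolding pauli_hamiltonian_def by auto
      have "ev2 (P i) (P s) = ev2 (P s) (P i)" using st len com unfolding state_moments_def by auto
      then have "sigma_cov ev ev2 (P s) (P i) = sigma_cov ev ev2 (P i) (P s)"
        unfolding sigma_cov_def by simp
      with a show ?thesis by simp
    qed
    have tc: "term_cov ev ev2 P s s = sigma2 ev (P s)" by (simp add: term_cov_def)
    show ?thesis
      unfolding tc[symmetric]
      by (rule split_sum[OF fin, where s=s and f="\<lambda>i k. c i * c k * shot_weight M m S i j * shot_weight M m S k j
                              * term_cov ev ev2 P i k"]) (auto simp: term_cov_def cov0)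
  qed
  show ?thesis unfolding estimator_variance_def
    by (simp add: inner distrib_left sum.distrib)
qed

lemma V1_closed:
  fixes S :: "nat \<Rightarrow> nat set"
  assumes shots: "\<forall>j<m. M j > 0"
    and T: "(\<Sum>k\<in>Gamma m S s. real (M k)) > 0"
  shows "(\<Sum>j<m. (1 / real (M j)) * (if s \<in> S j then c s * c s * shot_weight M m S s j * shot_weight M m S s j
                              * x else 0)) = c s * c s * x / (\<Sum>k\<in>Gamma m S s. real (M k))"
proof -
  define T where "T = (\<Sum>k\<in>Gamma m S s. real (M k))"
  have "(\<Sum>j<m. (1 / real (M j)) * (if s \<in> S j then c s * c s * shot_weight M m S s j * shot_weight M m S s j
                              * x else 0)) = (\<Sum>j\<in>Gamma m S s. c s * c s * x / T^2 * real (M j))"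
  proof -
    have "(\<Sum>j<m. (1 / real (M j)) * (if s \<in> S j then c s * c s * shot_weight M m S s j * shot_weight M m S s j
                              * x else 0)) = (\<Sum>j<m. if s \<in> S j then c s * c s * x / T^2 * real (M j) else 0)"
      apply (rule sum.cong, simp)
      using shots by (auto simp: shot_weight_def T_def power2_eq_square field_simps)
    also have "\<dots> = (\<Sum>j\<in>{j\<in>{..<m}. s \<in> S j}. c s * c s * x / T^2 * real (M j))"
      by (rule sum.inter_filter[symmetric]) simp
    also have "{j\<in>{..<m}. s \<in> S j} = Gamma m S s" by (auto simp: Gamma_def)
    finally show ?thesis .
  qed
  also have "\<dots> = c s * c s * x / T^2 * T" by (simp add: sum_distrib_left T_def)
  also have "\<dots> = c s * c s * x / T" using T by (simp add: T_def power2_eq_square)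
  finally show ?thesis by (simp add: T_def)
qed

theorem corollary1:
  fixes n N m l s :: nat
    and c :: "nat \<Rightarrow> real" and P :: "nat \<Rightarrow> pauli list"
    and ev :: "pauli list \<Rightarrow> real" and ev2 :: "pauli list \<Rightarrow> pauli list \<Rightarrow> real"
    and G G' :: "nat \<Rightarrow> nat set" and M :: "nat \<Rightarrow> nat"
  assumes ham: "pauli_hamiltonian n N c P"
    and st: "state_moments n ev ev2"
    and rep: "repacked_grouping N m P G"
    and ref: "refinement N m P G G'"
    and l: "l < m"
    and same: "\<forall>j<m. j \<noteq> l \<longrightarrow> G' j = G j"
    and new: "G' l - G l = {s}"
    and shots: "\<forall>j<m. M j > 0"
    and uncorr: "\<forall>i<N. i \<noteq> s \<and> pauli_commute (P i) (P s) \<longrightarrow> sigma_cov ev ev2 (P i) (P s) = 0"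
  shows "estimator_variance c P ev ev2 M m G' \<le> estimator_variance c P ev ev2 M m G
       \<and> (estimator_variance c P ev ev2 M m G' < estimator_variance c P ev ev2 M m G
            \<longleftrightarrow> sigma2 ev (P s) > 0)"
proof -
  have SG: "\<forall>j<m. G j \<subseteq> {..<N} \<and> commuting_set P (G j)"
    and cov: "(\<Union>j<m. G j) = {..<N}" using rep unfolding repacked_grouping_def by auto
  have SG': "\<forall>j<m. G j \<subseteq> G' j \<and> G' j \<subseteq> {..<N} \<and> commuting_set P (G' j)"
    using ref unfolding refinement_def by auto
  have sl: "s \<in> G' l" "s \<notin> G l" using new by auto
  have sN: "s < N" using SG' l sl by auto
  have G'l: "G' l = insert s (G l)" using new SG' l by auto
  have G'j: "G' j = (if j = l then insert s (G j) else G j)" if "j < m" for j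
    using G'l same that by auto
  obtain j0 where j0: "j0 < m" "s \<in> G j0" using cov sN by auto
  have GamG': "Gamma m G' s = insert l (Gamma m G s)" and lnot: "l \<notin> Gamma m G s"
    using G'j l sl by (auto simp: Gamma_def)
  have Gami: "Gamma m G' i = Gamma m G i" if "i \<noteq> s" for i
    using G'j that by (auto simp: Gamma_def split: if_splits)
  have finGam: "finite (Gamma m G s)" by (simp add: Gamma_def)
  define T where "T = (\<Sum>k\<in>Gamma m G s. real (M k))"
  have Tpos: "T > 0"
  proof -
    have jin: "j0 \<in> Gamma m G s" using j0 by (simp add: Gamma_def)
    have "T \<ge> real (M j0)" unfolding T_def
      by (rule member_le_sum[OF jin _ finGam]) simp
    moreover have "real (M j0) > 0" using shots j0 by simp
    ultimately show ?thesis by simp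
  qed
  have T': "(\<Sum>k\<in>Gamma m G' s. real (M k)) = T + real (M l)"
    unfolding GamG' T_def using lnot finGam by simp
  have Ml: "real (M l) > 0" using shots l by simp
  have V0eq: "(\<Sum>j<m. (1 / real (M j)) *
        (\<Sum>i\<in>G' j - {s}. \<Sum>k\<in>G' j - {s}. c i * c k * shot_weight M m G' i j * shot_weight M m G' k j
                              * term_cov ev ev2 P i k))
     = (\<Sum>j<m. (1 / real (M j)) *
        (\<Sum>i\<in>G j - {s}. \<Sum>k\<in>G j - {s}. c i * c k * shot_weight M m G i j * shot_weight M m G k j
                              * term_cov ev ev2 P i k))"
  proof (rule sum.cong[OF refl])
    fix j assume "j \<in> {..<m}"
    then have e: "G' j - {s} = G j - {s}" using G'j by auto
    have w: "shot_weight M m G' i j = shot_weight M m G i j" if "i \<in> G j - {s}" for i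
      using Gami[of i] that by (simp add: shot_weight_def)
    show "(1 / real (M j)) *
        (\<Sum>i\<in>G' j - {s}. \<Sum>k\<in>G' j - {s}. c i * c k * shot_weight M m G' i j * shot_weight M m G' k j
                              * term_cov ev ev2 P i k) = (1 / real (M j)) *
        (\<Sum>i\<in>G j - {s}. \<Sum>k\<in>G j - {s}. c i * c k * shot_weight M m G i j * shot_weight M m G k j
                              * term_cov ev ev2 P i k)"
      unfolding e by (simp add: w)
  qed
  define x where "x = sigma2 ev (P s)"
  have xge: "x \<ge> 0"
  proof -
    have "length (P s) = n" using ham sN unfolding pauli_hamiltonian_def by auto
    then have "\<bar>ev (P s)\<bar> \<le> 1" using st unfolding state_moments_def by auto
    then have "(ev (P s))^2 \<le> 1" by (simp add: abs_le_square_iff[of _ 1, simplified])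
    then show ?thesis unfolding x_def sigma2_def by simp
  qed
  have cs0: "c s \<noteq> 0" using ham sN unfolding pauli_hamiltonian_def by auto
  have cs: "c s * c s > 0" using cs0 by (auto simp: zero_less_mult_iff linorder_neq_iff)
  have SG'': "\<forall>j<m. G' j \<subseteq> {..<N} \<and> commuting_set P (G' j)" using SG' by auto
  define A where "A = (\<Sum>j<m. (1 / real (M j)) *
        (\<Sum>i\<in>G j - {s}. \<Sum>k\<in>G j - {s}. c i * c k * shot_weight M m G i j * shot_weight M m G k j
                              * term_cov ev ev2 P i k))"
  have TposG: "(\<Sum>k\<in>Gamma m G s. real (M k)) > 0" using Tpos by (simp add: T_def)
  have TposG': "(\<Sum>k\<in>Gamma m G' s. real (M k)) > 0" using Tpos Ml T' by simp
  have EG: "estimator_variance c P ev ev2 M m G = A + c s * c s * x / T"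
    unfolding A_def x_def T_def
    using decomp[OF ham st SG sN uncorr, where M=M] V1_closed[OF shots TposG, where c=c and x="sigma2 ev (P s)"]
    by simp
  have EG': "estimator_variance c P ev ev2 M m G' = A + c s * c s * x / (T + real (M l))"
    unfolding A_def x_def T'[symmetric]
    using decomp[OF ham st SG'' sN uncorr, where M=M] V1_closed[OF shots TposG', where c=c and x="sigma2 ev (P s)"] V0eq
    by simp
  have key: "c s * c s * x / (T + real (M l)) \<le> c s * c s * x / T"
    using Tpos Ml cs xge by (intro divide_left_mono) auto
  have key2: "c s * c s * x / (T + real (M l)) < c s * c s * x / T \<longleftrightarrow> x > 0"
  proof
    assume "x > 0"
    then show "c s * c s * x / (T + real (M l)) < c s * c s * x / T"
      using Tpos Ml cs by (intro divide_strict_left_mono) auto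
  next
    assume h: "c s * c s * x / (T + real (M l)) < c s * c s * x / T"
    show "x > 0"
    proof (rule ccontr)
      assume "\<not> x > 0" then have "x = 0" using xge by simp
      with h show False by simp
    qed
  qed
  show ?thesis unfolding EG EG' using key key2 by (simp add: x_def)
qed

end
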